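(* Fix integers $n\ge2$ and $1\le r\le n/2$. For every integer $2\le x\le n$, \[ q_r(x)\le\Big(1+\frac{r^x}{(n-r)^x}\Big)\Big(1-\frac xn\Big)^r \quad\text{and}\quad q_r(x)\le 1-2\frac rn\Big(1-\frac rn\Big). \] Furthermore, for any random variable $X$ with values in $\{0,\dots,n\}$, \[ \mathbb{E}q_r(X)\le 1-\frac rn\mathbb{E}X1(X\ge2)+\frac{r^2}{(n-r)^2}\mathbb{P}(X\ge2)+\frac12\frac{r^2}{n^2}\mathbb{E}X^21(X\ge2) \] and \[ \mathbb{E}q_r(X)\le\mathbb{P}(X<2)+e^{-2\frac rn(1-\frac rn)}\mathbb{P}(X\ge2). \]
   Context: For integers $1\le r\le n/2$ and $0\le x\le n$, $q_r(x)$ denotes the probability that a subset of size $x$ sampled uniformly at random from $\{1,\dots,n\}$ is either fully contained in $\{1,\dots,r\}$ or fully contained in $\{r+1,\dots,n\}$ (so $q_r(x)=1$ for $x\le1$). *)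

theory Defs
  imports "HOL-Probability.Probability"
begin

text \<open>q n r x: probability that a uniformly random x-subset of {1..n} is contained
  in {1..r} or in {r+1..n}.\<close>
definition q :: "nat \<Rightarrow> nat \<Rightarrow> nat \<Rightarrow> real" where
  "q n r x = real (card {S. S \<subseteq> {1..n} \<and> card S = x \<and>
                           (S \<subseteq> {1..r} \<or> S \<subseteq> {r+1..n})})
             / real (n choose x)"

end

theory Submission imports Defs begin

lemma q_le1: "q n r x \<le> 1"
proof -
  have "{S. S \<subseteq> {1..n} \<and> card S = x \<and> (S \<subseteq> {1..r} \<or> S \<subseteq> {r+1..n})} \<subseteq> {S. S \<subseteq> {1..n} \<and> card S = x}" by blast
  then have "card {S. S \<subseteq> {1..n} \<and> card S = x \<and> (S \<subseteq> {1..r} \<or> S \<subseteq> {r+1..n})} \<le> card {S. S \<subseteq> {1..n} \<and> card S = x}"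
    by (intro card_mono) (auto intro: finite_subset[of _ "Pow {1..n}"])
  also have "\<dots> = n choose x" using n_subsets[of "{1..n}" x] by simp
  finally show ?thesis unfolding q_def
    by (cases "n choose x = 0") (auto simp: divide_le_eq)
qed

lemma q_eq: assumes "1 \<le> x" "r \<le> n"
  shows "q n r x = (real (r choose x) + real ((n - r) choose x)) / real (n choose x)"
proof -
  have e: "{S. S \<subseteq> {1..n} \<and> card S = x \<and> (S \<subseteq> {1..r} \<or> S \<subseteq> {r+1..n})}
     = {S. S \<subseteq> {1..r} \<and> card S = x} \<union> {S. S \<subseteq> {r+1..n} \<and> card S = x}"
    using assms by auto
  have d: "{S. S \<subseteq> {1..r} \<and> card S = x} \<inter> {S. S \<subseteq> {r+1..n} \<and> card S = x} = {}"
    using assms by (auto simp: subset_iff) (metis Suc_le_eq card_0_eq ex_in_conv finite_atLeastAtMost le_zero_eq not_less_eq_eq rev_finite_subset subset_iff)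
  have f1: "finite {S. S \<subseteq> {1..r} \<and> card S = x}" by (auto intro: finite_subset[of _ "Pow {1..r}"])
  have f2: "finite {S. S \<subseteq> {r+1..n} \<and> card S = x}" by (auto intro: finite_subset[of _ "Pow {r+1..n}"])
  have "card {S. S \<subseteq> {1..n} \<and> card S = x \<and> (S \<subseteq> {1..r} \<or> S \<subseteq> {r+1..n})}
     = (r choose x) + ((n - r) choose x)"
    unfolding e using card_Un_disjoint[OF f1 f2 d] n_subsets[of "{1..r}" x] n_subsets[of "{r+1..n}" x] by simp
  then show ?thesis unfolding q_def by simp
qed

lemma bin_ratio: assumes "k \<le> n" "x \<le> n"
  shows "real ((n - k) choose x) \<le> real (n choose x) * (1 - real x / real n) ^ k"
  using assms
proof (induction k)
  case 0 then show ?case by simp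
next
  case (Suc k)
  define m where "m = n - k"
  have m1: "m \<ge> 1" using Suc.prems m_def by auto
  have mn: "m \<le> n" using m_def by auto
  have npos: "real n > 0" using m1 mn by auto
  have ge0: "0 \<le> 1 - real x / real n" using Suc.prems npos by (simp add: field_simps)
  have id: "real (m - x) * real (m choose x) = real m * real ((m - 1) choose x)"
    using binomial_absorb_comp[of m x] by (metis of_nat_mult)
  have r1: "real (m - x) \<le> real m * (1 - real x / real n)"
  proof (cases "x \<le> m")
    case True
    then have "real (m - x) = real m - real x" by simp
    moreover have "real x * real m \<le> real x * real n" using mn by (simp add: mult_left_mono)
    ultimately show ?thesis using npos by (simp add: field_simps)
  next
    case False then show ?thesis using ge0 by simp
  qed
  have "real ((m - 1) choose x) * real m = real (m - x) * real (m choose x)" using id by simp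
  also have "\<dots> \<le> real m * (1 - real x / real n) * real (m choose x)"
    by (rule mult_right_mono[OF r1]) simp
  finally have "real ((m - 1) choose x) \<le> (1 - real x / real n) * real (m choose x)"
    using m1 by (simp add: mult.commute mult.left_commute)
  also have "\<dots> \<le> (1 - real x / real n) * (real (n choose x) * (1 - real x / real n) ^ k)"
    using Suc m_def by (intro mult_left_mono ge0) auto
  finally show ?case using m_def by (simp add: algebra_simps)
qed


lemma suc_bin: "real (Suc x) * real (m choose Suc x) = real (m - x) * real (m choose x)"
proof -
  have "Suc x * (m choose Suc x) = (m - x) * (m choose x)"
  proof (cases m)
    case 0 then show ?thesis by simp
  next
    case (Suc m')
    have "Suc x * (Suc m' choose Suc x) = Suc m' * (m' choose x)" by (rule Suc_times_binomial)
    also have "\<dots> = (Suc m' - x) * (Suc m' choose x)"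
      using binomial_absorb_comp[of "Suc m'" x] by simp
    finally show ?thesis using Suc by simp
  qed
  then show ?thesis by (metis of_nat_mult)
qed

lemma bin_cmp: assumes "a \<le> b"
  shows "real (a choose x) * real b ^ x \<le> real a ^ x * real (b choose x)"
proof (induction x)
  case 0 then show ?case by simp
next
  case (Suc x)
  have k: "real (a - x) * real b \<le> real a * real (b - x)"
  proof (cases "x \<le> a")
    case True
    then have "real (a - x) = real a - real x" "real (b - x) = real b - real x" using assms by auto
    moreover have "real x * real a \<le> real x * real b" using assms by (simp add: mult_left_mono)
    ultimately show ?thesis by (simp add: algebra_simps)
  next
    case False then show ?thesis by simp
  qed
  have "real (Suc x) * (real (a choose Suc x) * real b ^ Suc x)
      = (real (Suc x) * real (a choose Suc x)) * real b ^ Suc x" by (rule mult.assoc[symmetric])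
  also have "\<dots> = (real (a - x) * real (a choose x)) * real b ^ Suc x" by (simp only: suc_bin)
  also have "\<dots> = (real (a - x) * real b) * (real (a choose x) * real b ^ x)" by (simp add: mult_ac)
  also have "\<dots> \<le> (real (a - x) * real b) * (real a ^ x * real (b choose x))"
    by (intro mult_left_mono Suc) auto
  also have "\<dots> \<le> (real a * real (b - x)) * (real a ^ x * real (b choose x))"
    by (intro mult_right_mono k) auto
  also have "\<dots> = real a ^ Suc x * (real (b - x) * real (b choose x))" by (simp add: mult_ac)
  also have "\<dots> = real a ^ Suc x * (real (Suc x) * real (b choose Suc x))" by (simp only: suc_bin)
  also have "\<dots> = real (Suc x) * (real a ^ Suc x * real (b choose Suc x))" by (simp add: mult_ac)
  finally show ?case by (simp only: mult_le_cancel_left_pos of_nat_0_less_iff zero_less_Suc simp_thms)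
qed

lemma bin_mono: assumes "m \<le> n" "Suc x \<le> n"
  shows "real (m choose Suc x) / real (n choose Suc x) \<le> real (m choose x) / real (n choose x)"
proof -
  have p1: "real (n choose Suc x) > 0" "real (n choose x) > 0" using assms by auto
  have "real (Suc x) * (real (m choose Suc x) * real (n choose x))
     = real (m - x) * real (m choose x) * real (n choose x)" using suc_bin[of x m] by simp
  also have "\<dots> \<le> real (n - x) * real (m choose x) * real (n choose x)"
    using assms by (intro mult_right_mono) auto
  also have "\<dots> = real (m choose x) * (real (n - x) * real (n choose x))" by (simp add: mult_ac)
  also have "\<dots> = real (m choose x) * (real (Suc x) * real (n choose Suc x))" by (simp only: suc_bin)
  also have "\<dots> = real (Suc x) * (real (m choose x) * real (n choose Suc x))" by (simp add: mult_ac)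
  finally have "real (m choose Suc x) * real (n choose x) \<le> real (m choose x) * real (n choose Suc x)"
    by (simp only: mult_le_cancel_left_pos of_nat_0_less_iff zero_less_Suc simp_thms)
  then show ?thesis using p1 by (simp add: divide_simps)
qed

lemma pow_bound: assumes "0 \<le> y" "y \<le> 1"
  shows "(1 - y) ^ k \<le> 1 - real k * y + real k ^ 2 * y ^ 2 / 2"
proof (induction k)
  case 0 then show ?case by simp
next
  case (Suc k)
  have "(1 - y) ^ Suc k \<le> (1 - y) * (1 - real k * y + real k ^ 2 * y ^ 2 / 2)"
    using Suc assms by (simp add: mult_left_mono)
  also have "\<dots> \<le> 1 - real (Suc k) * y + real (Suc k) ^ 2 * y ^ 2 / 2"
  proof -
    have "0 \<le> real k ^ 2 * y ^ 3 / 2 + y^2 / 2" using assms by simp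
    then show ?thesis by (simp add: algebra_simps power2_eq_square power3_eq_cube)
  qed
  finally show ?case .
qed


lemma choose2: "real (m choose 2) = real m * (real m - 1) / 2"
proof -
  have "real (Suc 1) * real (m choose Suc 1) = real (m - 1) * real (m choose 1)" by (rule suc_bin)
  then have "2 * real (m choose 2) = real (m - 1) * real m" by (simp only: Suc_1 choose_one of_nat_numeral)
  then show ?thesis by (cases m) (auto simp: algebra_simps)
qed

lemma pt1: assumes "1 \<le> r" "2 * r \<le> n" "2 \<le> x" "x \<le> n"
  shows "q n r x \<le> (1 + real r ^ x / (real n - real r) ^ x) * (1 - real x / real n) ^ r"
proof -
  have rn: "r \<le> n - r" "r \<le> n" using assms by auto
  have nr: "real (n - r) = real n - real r" using rn by simp
  have nrpos: "real n - real r > 0" using assms by simp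
  have c: "real (n choose x) > 0" using assms by simp
  define A where "A = real (r choose x)"
  define B where "B = real ((n - r) choose x)"
  define t where "t = real r ^ x / (real n - real r) ^ x"
  have t0: "0 \<le> t" unfolding t_def using nrpos by simp
  have "A * (real n - real r) ^ x \<le> real r ^ x * B"
    using bin_cmp[OF rn(1), of x] unfolding A_def B_def nr .
  then have hA: "A \<le> t * B" unfolding t_def using nrpos by (simp add: field_simps)
  have hB: "B \<le> real (n choose x) * (1 - real x / real n) ^ r"
    unfolding B_def by (rule bin_ratio) (use assms in auto)
  have "q n r x = (A + B) / real (n choose x)" unfolding A_def B_def
    by (rule q_eq) (use assms in auto)
  also have "\<dots> \<le> (1 + t) * B / real (n choose x)"
    using hA c by (intro divide_right_mono) (auto simp: algebra_simps)
  also have "\<dots> \<le> (1 + t) * (real (n choose x) * (1 - real x / real n) ^ r) / real (n choose x)"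
    using hB c t0 by (intro divide_right_mono mult_left_mono) auto
  also have "\<dots> = (1 + t) * (1 - real x / real n) ^ r" using c by simp
  finally show ?thesis unfolding t_def .
qed

lemma pt2: assumes "1 \<le> r" "2 * r \<le> n" "2 \<le> x" "x \<le> n"
  shows "q n r x \<le> 1 - 2 * (real r / real n) * (1 - real r / real n)"
proof -
  define g where "g x = real (r choose x) / real (n choose x) + real ((n - r) choose x) / real (n choose x)" for x
  have "x \<le> n \<longrightarrow> g x \<le> g 2" using assms(3)
  proof (induction x rule: dec_induct)
    case base then show ?case by simp
  next
    case (step x)
    show ?case
    proof
      assume "Suc x \<le> n"
      then have "g (Suc x) \<le> g x" unfolding g_def
        by (intro add_mono bin_mono) (use assms in auto)
      then show "g (Suc x) \<le> g 2" using step \<open>Suc x \<le> n\<close> by auto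
    qed
  qed
  then have "g x \<le> g 2" using assms by simp
  moreover have "q n r x = g x" unfolding g_def by (subst q_eq) (use assms in \<open>auto simp: add_divide_distrib\<close>)
  moreover have "g 2 \<le> 1 - 2 * (real r / real n) * (1 - real r / real n)"
  proof -
    define N where "N = real n"
    define R where "R = real r"
    have nr: "real (n - r) = N - R" using assms by (simp add: N_def R_def)
    have N2: "N \<ge> 2" "R \<ge> 1" "2 * R \<le> N" using assms by (auto simp: N_def R_def)
    have "g 2 = (R * (R - 1) / 2 + (N - R) * (N - R - 1) / 2) / (N * (N - 1) / 2)"
      unfolding g_def choose2 nr by (simp add: N_def R_def add_divide_distrib)
    also have "\<dots> = 1 - 2 * R * (N - R) / (N * (N - 1))"
      using N2 by (simp add: field_simps)
    also have "\<dots> \<le> 1 - 2 * R * (N - R) / (N * N)"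
    proof -
      have "2 * R * (N - R) / (N * N) \<le> 2 * R * (N - R) / (N * (N - 1))"
        using N2 by (intro divide_left_mono mult_mono) auto
      then show ?thesis by simp
    qed
    also have "\<dots> = 1 - 2 * (R / N) * (1 - R / N)" using N2 by (simp add: field_simps)
    finally show ?thesis by (simp add: N_def R_def)
  qed
  ultimately show ?thesis by simp
qed

lemma pt3: assumes "1 \<le> r" "2 * r \<le> n" "2 \<le> x" "x \<le> n"
  shows "q n r x \<le> 1 - real r / real n * real x + (real r)^2 / (real n - real r)^2
           + 1/2 * (real r)^2 / (real n)^2 * (real x)^2"
proof -
  define y where "y = real x / real n"
  define t where "t = real r / (real n - real r)"
  have npos: "real n > 0" using assms by auto
  have y01: "0 \<le> y" "y \<le> 1" using assms npos by (auto simp: y_def field_simps)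
  have t01: "0 \<le> t" "t \<le> 1" using assms by (auto simp: t_def field_simps)
  have p1: "(1 - y) ^ r \<le> 1" using y01 by (simp add: power_le_one)
  have p0: "0 \<le> (1 - y) ^ r" using y01 by simp
  have tx: "t ^ x \<le> t ^ 2" using t01 assms by (intro power_decreasing) auto
  have "q n r x \<le> (1 + t ^ x) * (1 - y) ^ r"
    using pt1[OF assms] by (simp add: t_def y_def power_divide)
  also have "\<dots> = (1 - y) ^ r + t ^ x * (1 - y) ^ r" by (simp add: algebra_simps)
  also have "\<dots> \<le> (1 - real r * y + real r ^ 2 * y ^ 2 / 2) + t ^ 2"
  proof (rule add_mono)
    show "(1 - y) ^ r \<le> 1 - real r * y + real r ^ 2 * y ^ 2 / 2" by (rule pow_bound[OF y01])
    have "t ^ x * (1 - y) ^ r \<le> t ^ x * 1" using p1 t01 by (intro mult_left_mono) auto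
    then show "t ^ x * (1 - y) ^ r \<le> t ^ 2" using tx by simp
  qed
  also have "\<dots> = 1 - real r / real n * real x + (real r)^2 / (real n - real r)^2
           + 1/2 * (real r)^2 / (real n)^2 * (real x)^2"
    by (simp add: y_def t_def power_divide field_simps)
  finally show ?thesis .
qed


lemma E_sum: assumes "set_pmf X \<subseteq> {0..n}"
  shows "measure_pmf.expectation X (f :: nat \<Rightarrow> real) = (\<Sum>a\<in>{0..n}. pmf X a * f a)"
  using assms by (subst integral_measure_pmf[of "{0..n}"]) auto

lemma P_sum: fixes X :: "nat pmf" assumes "set_pmf X \<subseteq> {0..n}"
  shows "measure_pmf.prob X A = (\<Sum>a\<in>{0..n}. pmf X a * (if a \<in> A then 1 else 0))"
proof -
  have "measure_pmf.prob X A = measure_pmf.expectation X (indicator A)"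
    by (simp add: Bochner_Integration.integral_indicator)
  also have "\<dots> = (\<Sum>a\<in>{0..n}. pmf X a * (if a \<in> A then 1 else 0))"
    by (subst E_sum[OF assms]) (simp add: indicator_def sum.inter_restrict mult_ac if_distrib cong: if_cong)
  finally show ?thesis .
qed

theorem mainTheorem12:
  fixes n r :: nat
  assumes "n \<ge> 2" and "1 \<le> r" and "2 * r \<le> n"
  shows "(\<forall>x. 2 \<le> x \<and> x \<le> n \<longrightarrow>
            q n r x \<le> (1 + real r ^ x / (real n - real r) ^ x) * (1 - real x / real n) ^ r
          \<and> q n r x \<le> 1 - 2 * (real r / real n) * (1 - real r / real n))
       \<and> (\<forall>X :: nat pmf. set_pmf X \<subseteq> {0..n} \<longrightarrow>
            measure_pmf.expectation X (q n r)
              \<le> 1 - real r / real n * measure_pmf.expectation X (\<lambda>x. if x \<ge> 2 then real x else 0)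
                 + (real r)^2 / (real n - real r)^2 * measure_pmf.prob X {x. x \<ge> 2}
                 + 1/2 * (real r)^2 / (real n)^2 * measure_pmf.expectation X (\<lambda>x. if x \<ge> 2 then (real x)^2 else 0)
          \<and> measure_pmf.expectation X (q n r)
              \<le> measure_pmf.prob X {x. x < 2}
                 + exp (- 2 * (real r / real n) * (1 - real r / real n)) * measure_pmf.prob X {x. x \<ge> 2})"
proof (intro conjI allI impI)
  fix x assume x: "2 \<le> x \<and> x \<le> n"
  show "q n r x \<le> (1 + real r ^ x / (real n - real r) ^ x) * (1 - real x / real n) ^ r"
    using pt1[OF assms(2,3)] x by auto
  show "q n r x \<le> 1 - 2 * (real r / real n) * (1 - real r / real n)"
    using pt2[OF assms(2,3)] x by auto
next
  fix X :: "nat pmf" assume X: "set_pmf X \<subseteq> {0..n}"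
  define a where "a = real r / real n"
  define b where "b = (real r)^2 / (real n - real r)^2"
  define c where "c = 1/2 * (real r)^2 / (real n)^2"
  define s where "s = 2 * (real r / real n) * (1 - real r / real n)"
  have pw3: "q n r x \<le> 1 - a * (if x \<ge> 2 then real x else 0) + b * (if x \<in> {x. x \<ge> 2} then 1 else 0)
      + c * (if x \<ge> 2 then (real x)^2 else 0)" if "x \<le> n" for x
  proof (cases "x \<ge> 2")
    case True then show ?thesis using pt3[OF assms(2,3) True that] by (simp add: a_def b_def c_def)
  next
    case False then show ?thesis using q_le1[of n r x] by simp
  qed
  have pw4: "q n r x \<le> (if x \<in> {x. x < 2} then 1 else 0) + exp (- s) * (if x \<in> {x. x \<ge> 2} then 1 else 0)"
    if "x \<le> n" for x
  proof (cases "x \<ge> 2")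
    case True
    have "q n r x \<le> 1 - s" using pt2[OF assms(2,3) True that] by (simp add: s_def)
    also have "\<dots> \<le> exp (- s)" using exp_ge_add_one_self[of "-s"] by simp
    finally show ?thesis using True by simp
  next
    case False then show ?thesis using q_le1[of n r x] by simp
  qed
  have "measure_pmf.expectation X (q n r) = (\<Sum>x\<in>{0..n}. pmf X x * q n r x)" by (rule E_sum[OF X])
  also have "\<dots> \<le> (\<Sum>x\<in>{0..n}. pmf X x * (1 - a * (if x \<ge> 2 then real x else 0) + b * (if x \<in> {x. x \<ge> 2} then 1 else 0)
      + c * (if x \<ge> 2 then (real x)^2 else 0)))"
    using pw3 by (intro sum_mono mult_left_mono) auto
  also have "\<dots> = (\<Sum>x\<in>{0..n}. pmf X x) - a * (\<Sum>x\<in>{0..n}. pmf X x * (if x \<ge> 2 then real x else 0))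
      + b * (\<Sum>x\<in>{0..n}. pmf X x * (if x \<in> {x. x \<ge> 2} then 1 else 0))
      + c * (\<Sum>x\<in>{0..n}. pmf X x * (if x \<ge> 2 then (real x)^2 else 0))"
    by (simp add: sum.distrib sum_subtractf sum_distrib_left algebra_simps)
  also have "\<dots> = 1 - real r / real n * measure_pmf.expectation X (\<lambda>x. if x \<ge> 2 then real x else 0)
                 + (real r)^2 / (real n - real r)^2 * measure_pmf.prob X {x. x \<ge> 2}
                 + 1/2 * (real r)^2 / (real n)^2 * measure_pmf.expectation X (\<lambda>x. if x \<ge> 2 then (real x)^2 else 0)"
    using X by (simp add: E_sum[OF X] P_sum[OF X] sum_pmf_eq_1 a_def b_def c_def)
  finally show "measure_pmf.expectation X (q n r)
              \<le> 1 - real r / real n * measure_pmf.expectation X (\<lambda>x. if x \<ge> 2 then real x else 0)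
                 + (real r)^2 / (real n - real r)^2 * measure_pmf.prob X {x. x \<ge> 2}
                 + 1/2 * (real r)^2 / (real n)^2 * measure_pmf.expectation X (\<lambda>x. if x \<ge> 2 then (real x)^2 else 0)" .
  have "measure_pmf.expectation X (q n r) = (\<Sum>x\<in>{0..n}. pmf X x * q n r x)" by (rule E_sum[OF X])
  also have "\<dots> \<le> (\<Sum>x\<in>{0..n}. pmf X x * ((if x \<in> {x. x < 2} then 1 else 0) + exp (- s) * (if x \<in> {x. x \<ge> 2} then 1 else 0)))"
    using pw4 by (intro sum_mono mult_left_mono) auto
  also have "\<dots> = (\<Sum>x\<in>{0..n}. pmf X x * (if x \<in> {x. x < 2} then 1 else 0))
       + exp (- s) * (\<Sum>x\<in>{0..n}. pmf X x * (if x \<in> {x. x \<ge> 2} then 1 else 0))"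
    by (simp add: sum.distrib sum_distrib_left algebra_simps)
  also have "\<dots> = measure_pmf.prob X {x. x < 2}
                 + exp (- 2 * (real r / real n) * (1 - real r / real n)) * measure_pmf.prob X {x. x \<ge> 2}"
    by (simp only: P_sum[OF X, symmetric] s_def) simp
  finally show "measure_pmf.expectation X (q n r)
              \<le> measure_pmf.prob X {x. x < 2}
                 + exp (- 2 * (real r / real n) * (1 - real r / real n)) * measure_pmf.prob X {x. x \<ge> 2}" .
qed

end
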